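(* Let $X$ be a topological space and let $(A_n)_{n\in\mathbb N}$ be subsets of $X$ (each with the subspace topology) such that $C(A_n)$ has the countable sup property for every $n$ and $\bigcup_{n=1}^\infty A_n$ is dense in $X$. Then $C(X)$ has the countable sup property.
   Context: $C(Y)$ denotes the vector lattice of all real-valued continuous functions on a space $Y$ with the pointwise order. A vector lattice has the countable sup property if every nonempty subset possessing a supremum contains a countable subset with the same supremum. *)

theory Defs
  imports "HOL-Analysis.Analysis"
begin

text \<open>Elements are represented extensionally: they vanish outside the
  carrier of Y, so that each element of C(Y) has exactly one representative.\<close>
definition Cfun :: "'a topology \<Rightarrow> ('a \<Rightarrow> real) set" where
  "Cfun Y = {f. continuous_map Y euclideanreal f \<and> (\<forall>x. x \<notin> topspace Y \<longrightarrow> f x = 0)}"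

definition Cle :: "'a topology \<Rightarrow> ('a \<Rightarrow> real) \<Rightarrow> ('a \<Rightarrow> real) \<Rightarrow> bool" where
  "Cle Y f g \<longleftrightarrow> (\<forall>x\<in>topspace Y. f x \<le> g x)"

definition is_Csup :: "'a topology \<Rightarrow> ('a \<Rightarrow> real) set \<Rightarrow> ('a \<Rightarrow> real) \<Rightarrow> bool" where
  "is_Csup Y S g \<longleftrightarrow> g \<in> Cfun Y \<and> (\<forall>f\<in>S. Cle Y f g)
     \<and> (\<forall>h\<in>Cfun Y. (\<forall>f\<in>S. Cle Y f h) \<longrightarrow> Cle Y g h)"

definition countable_sup_property :: "'a topology \<Rightarrow> bool" where
  "countable_sup_property Y \<longleftrightarrow>
     (\<forall>S g. S \<subseteq> Cfun Y \<and> S \<noteq> {} \<and> is_Csup Y S g \<longrightarrow>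
        (\<exists>T. T \<subseteq> S \<and> countable T \<and> is_Csup Y T g))"

end

theory Submission
  imports Defs
begin

definition extz :: "'a topology \<Rightarrow> ('a \<Rightarrow> real) \<Rightarrow> ('a \<Rightarrow> real)" where
  "extz Y f = (\<lambda>x. if x \<in> topspace Y then f x else 0)"

lemma extz_Cfun: "continuous_map Y euclideanreal f \<Longrightarrow> extz Y f \<in> Cfun Y"
  unfolding Cfun_def extz_def
  by (auto intro: continuous_map_eq)

definition dens :: "'a topology \<Rightarrow> ('a \<Rightarrow> real) set \<Rightarrow> ('a \<Rightarrow> real) \<Rightarrow> bool" where
  "dens Y S g \<longleftrightarrow> (\<forall>\<epsilon>>0. \<forall>\<rho>. continuous_map Y euclideanreal \<rho> \<longrightarrow> (\<exists>x0\<in>topspace Y. \<rho> x0 > 0)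
      \<longrightarrow> (\<exists>f\<in>S. \<exists>x\<in>topspace Y. \<rho> x > 0 \<and> g x - \<epsilon> < f x))"

lemma csup_dens:
  assumes "is_Csup Y S g" shows "dens Y S g"
  unfolding dens_def
proof (intro allI impI)
  fix \<epsilon> :: real and \<rho>
  assume e: "\<epsilon> > 0" and c: "continuous_map Y euclideanreal \<rho>" and "\<exists>x0\<in>topspace Y. \<rho> x0 > 0"
  then obtain x0 where x0: "x0 \<in> topspace Y" "\<rho> x0 > 0" by blast
  show "\<exists>f\<in>S. \<exists>x\<in>topspace Y. \<rho> x > 0 \<and> g x - \<epsilon> < f x"
  proof (rule ccontr)
    assume H: "\<not> ?thesis"
    have g: "g \<in> Cfun Y" "\<forall>f\<in>S. Cle Y f g" and lub: "\<forall>h\<in>Cfun Y. (\<forall>f\<in>S. Cle Y f h) \<longrightarrow> Cle Y g h"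
      using assms unfolding is_Csup_def by auto
    define h where "h = extz Y (\<lambda>x. g x - \<epsilon> * min 1 (max 0 (\<rho> x / \<rho> x0)))"
    have gc: "continuous_map Y euclideanreal g" using g unfolding Cfun_def by auto
    have "h \<in> Cfun Y" unfolding h_def
      by (intro extz_Cfun continuous_intros gc c) (use x0 in auto)
    moreover have "\<forall>f\<in>S. Cle Y f h"
    proof
      fix f assume f: "f \<in> S"
      show "Cle Y f h" unfolding Cle_def
      proof
        fix x assume x: "x \<in> topspace Y"
        have fg: "f x \<le> g x" using g(2) f x unfolding Cle_def by auto
        show "f x \<le> h x"
        proof (cases "\<rho> x > 0")
          case True
          then have "f x \<le> g x - \<epsilon>" using H f x by force
          moreover have "\<epsilon> * min 1 (max 0 (\<rho> x / \<rho> x0)) \<le> \<epsilon>" using e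
            by (simp add: mult_left_le)
          ultimately show ?thesis unfolding h_def extz_def using x by simp
        next
          case False
          then have "\<rho> x / \<rho> x0 \<le> 0" using x0 by (simp add: divide_nonpos_pos)
          then show ?thesis unfolding h_def extz_def using x fg by simp
        qed
      qed
    qed
    ultimately have "Cle Y g h" using lub by blast
    then have "g x0 \<le> h x0" using x0 unfolding Cle_def by auto
    then show False using x0 e unfolding h_def extz_def by simp
  qed
qed

lemma dens_csup:
  assumes g: "g \<in> Cfun Y" and ub: "\<forall>f\<in>S. Cle Y f g" and d: "dens Y S g"
  shows "is_Csup Y S g"
  unfolding is_Csup_def
proof (intro conjI g ub ballI impI)
  fix h assume h: "h \<in> Cfun Y" and hub: "\<forall>f\<in>S. Cle Y f h"
  show "Cle Y g h" unfolding Cle_def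
  proof (rule ballI, rule ccontr)
    fix x0 assume x0: "x0 \<in> topspace Y" and n: "\<not> g x0 \<le> h x0"
    define \<epsilon> where "\<epsilon> = (g x0 - h x0) / 2"
    have e: "\<epsilon> > 0" using n unfolding \<epsilon>_def by simp
    have "continuous_map Y euclideanreal (\<lambda>x. g x - h x - \<epsilon>)"
      using g h unfolding Cfun_def by (intro continuous_intros) auto
    moreover have "g x0 - h x0 - \<epsilon> > 0" using n unfolding \<epsilon>_def by simp
    ultimately obtain f x where f: "f \<in> S" "x \<in> topspace Y" "g x - h x - \<epsilon> > 0" "g x - \<epsilon> < f x"
      using d e x0 unfolding dens_def by blast
    then have "h x < f x" by simp
    moreover have "f x \<le> h x" using hub f unfolding Cle_def by auto
    ultimately show False by simp
  qed
qed

theorem proposition4p11: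
  fixes X :: "'a topology" and A :: "nat \<Rightarrow> 'a set"
  assumes "\<And>n. A n \<subseteq> topspace X"
    and "\<And>n. countable_sup_property (subtopology X (A n))"
    and "X closure_of (\<Union>n. A n) = topspace X"
  shows "countable_sup_property X"
proof -
  let ?Y = "\<lambda>n. subtopology X (A n)"
  have tsY: "\<And>n. topspace (?Y n) = A n" by (simp add: Int_absorb1 assms(1))
  define e :: "nat \<Rightarrow> real" where "e m = inverse (real (Suc m))" for m
  have epos: "\<And>m. e m > 0" unfolding e_def by simp
  show ?thesis unfolding countable_sup_property_def
  proof (intro allI impI, elim conjE)
    fix S g assume SC: "S \<subseteq> Cfun X" and Sne: "S \<noteq> {}" and sup: "is_Csup X S g"
    have gC: "g \<in> Cfun X" and gub: "\<forall>f\<in>S. Cle X f g" using sup unfolding is_Csup_def by auto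
    have gc: "continuous_map X euclideanreal g" using gC unfolding Cfun_def by auto
    have fc: "\<And>f. f \<in> S \<Longrightarrow> continuous_map X euclideanreal f" using SC unfolding Cfun_def by auto
    define u where "u n m f k = extz (?Y n) (\<lambda>x. min (e m) (real k * max 0 (f x - g x + e m)))"
      for n m f and k :: nat
    define G where "G n m = {u n m f k | f k. f \<in> S} \<union>
       {\<psi> \<in> Cfun (?Y n). (\<forall>x\<in>A n. 0 \<le> \<psi> x \<and> \<psi> x \<le> e m) \<and> (\<forall>x\<in>A n. \<forall>f\<in>S. g x - e m < f x \<longrightarrow> \<psi> x = 0)}" for n m
    define c where "c n m = extz (?Y n) (\<lambda>_. e m)" for n m
    have uC: "u n m f k \<in> Cfun (?Y n)" if "f \<in> S" for n m f k
      unfolding u_def using fc[OF that] gc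
      by (intro extz_Cfun continuous_intros continuous_map_from_subtopology) auto
    have GC: "G n m \<subseteq> Cfun (?Y n)" for n m unfolding G_def using uC by auto
    have Gne: "G n m \<noteq> {}" for n m
    proof -
      have "extz (?Y n) (\<lambda>_. 0) \<in> Cfun (?Y n)" by (intro extz_Cfun) simp
      then have "extz (?Y n) (\<lambda>_. 0) \<in> G n m" unfolding G_def extz_def using epos[of m] tsY[of n]
        by (auto simp: less_imp_le)
      then show ?thesis by blast
    qed
    have Gsup: "is_Csup (?Y n) (G n m) (c n m)" for n m
    proof (rule dens_csup)
      show "c n m \<in> Cfun (?Y n)" unfolding c_def by (intro extz_Cfun) simp
      show "\<forall>f\<in>G n m. Cle (?Y n) f (c n m)"
        unfolding G_def Cle_def c_def u_def extz_def tsY by auto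
      show "dens (?Y n) (G n m) (c n m)" unfolding dens_def
      proof (intro allI impI)
        fix \<epsilon> :: real and \<rho>
        assume e: "\<epsilon> > 0" and rc: "continuous_map (?Y n) euclideanreal \<rho>" and "\<exists>x0\<in>topspace (?Y n). \<rho> x0 > 0"
        then obtain x0 where x0: "x0 \<in> A n" "\<rho> x0 > 0" using tsY by blast
        show "\<exists>f\<in>G n m. \<exists>x\<in>topspace (?Y n). \<rho> x > 0 \<and> c n m x - \<epsilon> < f x"
        proof (cases "\<exists>f\<in>S. \<exists>x\<in>A n. \<rho> x > 0 \<and> g x - e m < f x")
          case True
          then obtain f x where f: "f \<in> S" "x \<in> A n" "\<rho> x > 0" "g x - e m < f x" by blast
          define d where "d = f x - g x + e m"
          have dpos: "d > 0" using f unfolding d_def by simp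
          define k where "k = nat \<lceil>e m / d\<rceil>"
          have "e m / d \<le> real k" unfolding k_def by linarith
          then have "e m \<le> real k * d" using dpos by (simp add: divide_le_eq mult.commute)
          then have "u n m f k x = e m" unfolding u_def extz_def using f tsY dpos
            by (simp add: d_def[symmetric] min_def)
          moreover have "u n m f k \<in> G n m" unfolding G_def using f by blast
          ultimately show ?thesis using f e tsY unfolding c_def extz_def by force
        next
          case False
          define \<psi> where "\<psi> = extz (?Y n) (\<lambda>x. max 0 (min (e m) (\<rho> x * (e m / \<rho> x0))))"
          have "\<psi> \<in> Cfun (?Y n)" unfolding \<psi>_def by (intro extz_Cfun continuous_intros rc)
          moreover have "\<forall>x\<in>A n. 0 \<le> \<psi> x \<and> \<psi> x \<le> e m" unfolding \<psi>_def extz_def using epos[of m]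
            by (auto simp: tsY)
          moreover have "\<forall>x\<in>A n. \<forall>f\<in>S. g x - e m < f x \<longrightarrow> \<psi> x = 0"
          proof (intro ballI impI)
            fix x f assume "x \<in> A n" "f \<in> S" "g x - e m < f x"
            then have "\<rho> x \<le> 0" using False by force
            moreover have "0 \<le> e m / \<rho> x0" using x0 epos[of m] by simp
            ultimately have "\<rho> x * (e m / \<rho> x0) \<le> 0" by (rule mult_nonpos_nonneg)
            then show "\<psi> x = 0" unfolding \<psi>_def extz_def by simp
          qed
          ultimately have "\<psi> \<in> G n m" unfolding G_def by blast
          moreover have "\<psi> x0 = e m" unfolding \<psi>_def extz_def using x0 tsY epos[of m] by simp
          ultimately show ?thesis using x0 e tsY unfolding c_def extz_def by force
        qed
      qed
    qed
    have exT: "\<exists>T. T \<subseteq> G n m \<and> countable T \<and> is_Csup (?Y n) T (c n m)" for n m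
      using assms(2)[of n, unfolded countable_sup_property_def, rule_format, of "G n m" "c n m"]
        GC[of n m] Gne[of n m] Gsup[of n m] by blast
    define T where "T n m = (SOME T. T \<subseteq> G n m \<and> countable T \<and> is_Csup (?Y n) T (c n m))" for n m
    have T0: "T n m \<subseteq> G n m \<and> countable (T n m) \<and> is_Csup (?Y n) (T n m) (c n m)" for n m
      unfolding T_def by (rule someI_ex[OF exT])
    have T: "\<And>n m. T n m \<subseteq> G n m" "\<And>n m. countable (T n m)"
      "\<And>n m. is_Csup (?Y n) (T n m) (c n m)" using T0 by auto
    define pick where "pick n m t = (SOME f. f \<in> S \<and> (\<exists>k. t = u n m f k))" for n m t
    define TT where "TT = (\<Union>n. \<Union>m. pick n m ` {t \<in> T n m. \<exists>f k. f \<in> S \<and> t = u n m f k})"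
    have pick: "pick n m t \<in> S \<and> (\<exists>k. t = u n m (pick n m t) k)" if "\<exists>f k. f \<in> S \<and> t = u n m f k" for n m t
    proof -
      have "\<exists>f. f \<in> S \<and> (\<exists>k. t = u n m f k)" using that by blast
      then show ?thesis unfolding pick_def by (rule someI_ex)
    qed
    have TTS: "TT \<subseteq> S" unfolding TT_def using pick by blast
    have cTT: "countable TT" unfolding TT_def using T(2) by (intro countable_UN countable_image) auto
    have "is_Csup X TT g"
    proof (rule dens_csup[OF gC])
      show "\<forall>f\<in>TT. Cle X f g" using gub TTS by auto
      show "dens X TT g" unfolding dens_def
      proof (intro allI impI)
        fix \<epsilon> :: real and \<rho>
        assume e: "\<epsilon> > 0" and rc: "continuous_map X euclideanreal \<rho>" and ex0: "\<exists>x0\<in>topspace X. \<rho> x0 > 0"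
        obtain m where m: "inverse (real (Suc m)) < \<epsilon>" using reals_Archimedean[OF e] by blast
        have em: "e m < \<epsilon>" using m unfolding e_def .
        obtain f0 x1 where f0: "f0 \<in> S" "x1 \<in> topspace X" "\<rho> x1 > 0" "g x1 - e m < f0 x1"
          using csup_dens[OF sup] epos[of m] rc ex0 unfolding dens_def by blast
        define \<sigma> where "\<sigma> x = min (\<rho> x) (f0 x - g x + e m)" for x
        have sc: "continuous_map X euclideanreal \<sigma>" unfolding \<sigma>_def using rc fc[OF f0(1)] gc
          by (intro continuous_intros) auto
        define Ob where "Ob = {x \<in> topspace X. \<sigma> x \<in> {0<..}}"
        have Oo: "openin X Ob" unfolding Ob_def by (rule openin_continuous_map_preimage[OF sc]) simp
        have "x1 \<in> Ob" unfolding Ob_def \<sigma>_def using f0 by auto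
        then have "Ob \<inter> X closure_of (\<Union>n. A n) \<noteq> {}" using assms(3) f0(2) by auto
        then have "Ob \<inter> (\<Union>n. A n) \<noteq> {}" using openin_Int_closure_of_eq_empty[OF Oo] by blast
        then obtain n x2 where x2: "x2 \<in> A n" "x2 \<in> Ob" by blast
        have sc': "continuous_map (?Y n) euclideanreal \<sigma>" using sc by (rule continuous_map_from_subtopology)
        have "\<exists>x0\<in>topspace (?Y n). \<sigma> x0 > 0" using x2 tsY unfolding Ob_def by auto
        then obtain t x where tx: "t \<in> T n m" "x \<in> A n" "\<sigma> x > 0" "c n m x - e m < t x"
          using csup_dens[OF T(3)[of n m]] sc' epos[of m] tsY unfolding dens_def by blast
        have tpos: "t x > 0" using tx assms(1) unfolding c_def extz_def by (auto split: if_splits)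
        have xX: "x \<in> topspace X" using tx assms(1) by auto
        have rx: "\<rho> x > 0" "g x - e m < f0 x" using tx unfolding \<sigma>_def by auto
        have "t \<in> G n m" using T(1) tx by blast
        then have "\<exists>f k. f \<in> S \<and> t = u n m f k"
        proof (unfold G_def, elim UnE)
          assume "t \<in> {\<psi> \<in> Cfun (?Y n). (\<forall>x\<in>A n. 0 \<le> \<psi> x \<and> \<psi> x \<le> e m) \<and> (\<forall>x\<in>A n. \<forall>f\<in>S. g x - e m < f x \<longrightarrow> \<psi> x = 0)}"
          then have "t x = 0" using tx(2) f0(1) rx(2) by blast
          then show ?thesis using tpos by simp
        qed blast
        then have p: "pick n m t \<in> S" "\<exists>k. t = u n m (pick n m t) k" using pick by blast+
        have inTT: "pick n m t \<in> TT" unfolding TT_def using tx(1) \<open>\<exists>f k. f \<in> S \<and> t = u n m f k\<close> by blast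
        obtain k where teq: "t = u n m (pick n m t) k" using p by blast
        have "t x = u n m (pick n m t) k x" using teq by (rule fun_cong)
        also have "\<dots> = min (e m) (real k * max 0 (pick n m t x - g x + e m))"
          unfolding u_def extz_def using xX tx(2) by simp
        finally have "0 < min (e m) (real k * max 0 (pick n m t x - g x + e m))"
          using tpos by simp
        then have "0 < real k * max 0 (pick n m t x - g x + e m)" by simp
        then have "0 < max 0 (pick n m t x - g x + e m)" by (simp add: zero_less_mult_iff)
        then have "pick n m t x - g x + e m > 0" by simp
        then have "g x - \<epsilon> < pick n m t x" using em by simp
        then show "\<exists>f\<in>TT. \<exists>x\<in>topspace X. \<rho> x > 0 \<and> g x - \<epsilon> < f x" using inTT xX rx by blast
      qed
    qed
    then show "\<exists>T. T \<subseteq> S \<and> countable T \<and> is_Csup X T g" using TTS cTT by blast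
  qed
qed

end
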